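(* In the setting below, the quasi-cyclic code $C$ is Euclidean LCD if and only if all of the following hold: (I) $g(x)$ is self-reciprocal; (II) $l(x)$ is self-reciprocal; (III) $\gcd(t_{22}(x),g_{12}(x))=1$; (IV) $\gcd\big(r_{22}(x),\ g_{11}(x)\bar g_{11}(x)+g_{12}(x)\bar g_{12}(x)\big)=1$.
   Context: Let $q$ be a prime power, $F=\mathbb{F}_q$, $m\ge1$ with $\gcd(q,m)=1$, and $R=F[x]/\langle x^m-1\rangle$; elements of $R$ are represented by polynomials of degree $<m$ and identified with their coefficient vectors in $F^m$. A quasi-cyclic code of length $2m$ and index $2$ is an $R$-submodule $C\subseteq R^2$. The Euclidean inner product of $(a_1,a_2),(b_1,b_2)\in R^2$ is the sum of the standard dot products of the coefficient vectors of $a_1,b_1$ and of $a_2,b_2$; $C^{\perp_e}$ is the dual with respect to it, and $C$ is Euclidean LCD if $C\cap C^{\perp_e}=\{0\}$. For a nonzero polynomial $f$ of degree $k$, its reciprocal is $f^*(x)=x^kf(x^{-1})$; $f$ is self-reciprocal if $f^*=\alpha f$ for some $\alpha\in F$. For a polynomial $f$ of degree at most $m$, its transpose is $\bar f(x)=x^m f(x^{-1})$. Suppose $C$ is generated as an $R$-module by $(g_{11}(x),g_{12}(x))$ and $(0,g_{22}(x))$, where $g_{11},g_{12},g_{22}\in F[x]$ satisfy: $g_{11}\mid x^m-1$, $g_{22}\mid x^m-1$, $\deg g_{12}<\deg g_{22}$, and $g_{11}g_{22}\mid (x^m-1)g_{12}$. Define $g=\gcd(g_{11},g_{22})$, $l=(x^m-1)/\mathrm{lcm}(g_{11},g_{22})$,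 $g_{11}=g\,g_{11}'$, $g_{22}=g\,g_{22}'$, $r_{11}=\gcd(g_{11}',g_{11}'^* )$, $t_{11}=g_{11}'/r_{11}$, $r_{22}=\gcd(g_{22}',g_{22}'^* )$, $t_{22}=g_{22}'/r_{22}$. *)

theory Defs
  imports "HOL-Computational_Algebra.Computational_Algebra"
begin

definition xm1 :: "nat \<Rightarrow> 'a::comm_ring_1 poly" where
  "xm1 m = monom 1 m - 1"

text \<open>Elements of R = F[x]/(x^m-1), represented by polynomials of degree < m.\<close>
definition Rm :: "nat \<Rightarrow> 'a::field poly set" where
  "Rm m = {p. degree p < m}"

text \<open>The R-submodule of R^2 generated by (g11,g12) and (0,g22).\<close>
definition qc_code :: "nat \<Rightarrow> 'a::field poly \<Rightarrow> 'a poly \<Rightarrow> 'a poly \<Rightarrow> ('a poly \<times> 'a poly) set" where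
  "qc_code m g11 g12 g22 =
     {((a * g11) mod xm1 m, (a * g12 + b * g22) mod xm1 m) | a b. a \<in> Rm m \<and> b \<in> Rm m}"

definition euclid_ip :: "nat \<Rightarrow> 'a::field poly \<times> 'a poly \<Rightarrow> 'a poly \<times> 'a poly \<Rightarrow> 'a" where
  "euclid_ip m u v =
     (\<Sum>i<m. coeff (fst u) i * coeff (fst v) i) + (\<Sum>i<m. coeff (snd u) i * coeff (snd v) i)"

definition euclid_dual :: "nat \<Rightarrow> ('a::field poly \<times> 'a poly) set \<Rightarrow> ('a poly \<times> 'a poly) set" where
  "euclid_dual m C = {v. v \<in> Rm m \<times> Rm m \<and> (\<forall>c\<in>C. euclid_ip m v c = 0)}"

definition euclid_LCD :: "nat \<Rightarrow> ('a::field poly \<times> 'a poly) set \<Rightarrow> bool" where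
  "euclid_LCD m C \<longleftrightarrow> C \<inter> euclid_dual m C = {(0, 0)}"

text \<open>Reciprocal f^* = x^(deg f) f(1/x) is the library's reflect_poly.\<close>
definition self_reciprocal :: "'a::field poly \<Rightarrow> bool" where
  "self_reciprocal f \<longleftrightarrow> f \<noteq> 0 \<and> (\<exists>\<alpha>. reflect_poly f = smult \<alpha> f)"

text \<open>Transpose f-bar = x^m f(1/x), for degree f \<le> m.\<close>
definition transpose_poly :: "nat \<Rightarrow> 'a::field poly \<Rightarrow> 'a poly" where
  "transpose_poly m f = monom 1 (m - degree f) * reflect_poly f"

end

theory Submission
  imports Defs "HOL-Number_Theory.Residues"
begin

hide_const (open) up_ring.coeff up_ring.monom module.smult


lemma xm1_ne0: "m \<ge> 1 \<Longrightarrow> xm1 m \<noteq> (0::'a::field_gcd poly)"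
proof
  assume "m \<ge> 1" "xm1 m = (0::'a poly)"
  then have "coeff (xm1 m) m = (0::'a)" by simp
  with \<open>m\<ge>1\<close> show False by (simp add: xm1_def coeff_monom)
qed

lemma degree_xm1: "m \<ge> 1 \<Longrightarrow> degree (xm1 m :: 'a::field_gcd poly) = m"
proof -
  assume "m \<ge> 1"
  have "xm1 m = monom (1::'a) m + (- 1)" by (simp add: xm1_def)
  also have "degree \<dots> = m" using \<open>m\<ge>1\<close> by (subst degree_add_eq_left) (simp_all add: degree_monom_eq)
  finally show ?thesis .
qed

lemma coeff_xm1: "coeff (xm1 m :: 'a::field_gcd poly) i = (if i = m then 1 else 0) - (if i = 0 then 1 else 0)"
  unfolding xm1_def by (simp add: coeff_monom)

lemma monom_cong_xm1: "[monom (1::'a::field_gcd) m = 1] (mod xm1 m)"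
  unfolding xm1_def by (simp add: cong_iff_dvd_diff)

lemma monom_pow_cong: "[monom (1::'a::field_gcd) (m*k) = 1] (mod xm1 m)"
proof -
  have "monom (1::'a) (m*k) = monom 1 m ^ k" by (simp add: monom_power mult.commute)
  moreover have "[monom (1::'a) m ^ k = 1 ^ k] (mod xm1 m)" by (intro cong_pow monom_cong_xm1)
  ultimately show ?thesis by simp
qed

lemma monom_mod_cong: "[monom (1::'a::field_gcd) n = monom 1 (n mod m)] (mod xm1 m)"
proof -
  have "monom (1::'a) n = monom 1 (m * (n div m)) * monom 1 (n mod m)"
    by (simp add: mult_monom)
  moreover have "[monom (1::'a) (m * (n div m)) * monom 1 (n mod m) = 1 * monom 1 (n mod m)] (mod xm1 m)"
    by (intro cong_mult monom_pow_cong cong_refl)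
  ultimately show ?thesis by simp
qed

definition J :: "nat \<Rightarrow> 'a::field_gcd poly \<Rightarrow> 'a poly" where
  "J m p = pcompose p (monom 1 (m - 1))"

lemma J_mult: "J m (p * q) = J m p * J m q" by (simp add: J_def pcompose_mult)
lemma J_add: "J m (p + q) = J m p + J m q" by (simp add: J_def pcompose_add)
lemma J_diff: "J m (p - q) = J m p - J m q" by (simp add: J_def pcompose_diff)
lemma J_uminus: "J m (- q) = - J m q" by (simp add: J_def pcompose_uminus)
lemma J_0[simp]: "J m 0 = 0" by (simp add: J_def)
lemma J_pCons: "J m (pCons a p) = [:a:] + monom 1 (m-1) * J m p"
  by (simp add: J_def pcompose_pCons)
lemma J_monom: "J m (monom (1::'a::field_gcd) k) = monom 1 ((m-1)*k)"
proof (induct k)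
  case (Suc k)
  have "J m (monom 1 (Suc k)) = monom 1 (m-1) * J m (monom 1 k)"
    by (simp add: J_def monom_Suc pcompose_pCons)
  also have "\<dots> = monom 1 (m-1) * monom (1::'a) ((m-1)*k)" using Suc by simp
  also have "\<dots> = monom 1 ((m-1)*Suc k)" by (simp only: mult_monom mult_Suc_right mult_1)
  finally show ?case .
qed (simp add: J_def monom_0)



lemma J_one[simp]: "J m 1 = 1" by (simp add: J_def pcompose_1)

lemma xm1_dvd_J_xm1: "xm1 m dvd J m (xm1 m :: 'a::field_gcd poly)"
proof -
  have "J m (xm1 m :: 'a poly) = monom 1 (m * (m-1)) - 1"
    by (simp add: xm1_def J_diff J_monom mult.commute)
  moreover have "[monom (1::'a) (m*(m-1)) = 1] (mod xm1 m)" by (rule monom_pow_cong)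
  ultimately show ?thesis by (simp add: cong_iff_dvd_diff)
qed

lemma J_cong: "[p = q] (mod xm1 m) \<Longrightarrow> [J m p = J m q] (mod xm1 m)"
  for p q :: "'a::field_gcd poly"
proof -
  assume "[p = q] (mod xm1 m)"
  then obtain k where "p - q = xm1 m * k" by (auto simp: cong_iff_dvd_diff elim!: dvdE)
  then have "J m p - J m q = J m (xm1 m) * J m k" by (metis J_diff J_mult)
  then have "xm1 m dvd J m p - J m q" using xm1_dvd_J_xm1 by (metis dvd_mult2)
  then show ?thesis by (simp add: cong_iff_dvd_diff)
qed

lemma J_reflect_cong:
  fixes y :: "'a::field_gcd poly"
  assumes "m \<ge> 1"
  shows "[J m y * monom 1 (degree y) = reflect_poly y] (mod xm1 m)"
proof (induct y)
  case 0 then show ?case by simp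
next
  case (pCons a p)
  show ?case
  proof (cases "p = 0")
    case True then show ?thesis by (simp add: J_def)
  next
    case False
    have d: "degree (pCons a p) = Suc (degree p)" using False by simp
    have "J m (pCons a p) * monom 1 (degree (pCons a p)) =
       monom a (Suc (degree p)) + monom 1 m * (J m p * monom 1 (degree p))"
    proof -
      have e1: "[:a:] * monom 1 (Suc (degree p)) = monom a (Suc (degree p))"
        by (simp add: smult_monom)
      have e2: "monom (1::'a) (m-1) * monom 1 (Suc (degree p)) = monom 1 m * monom 1 (degree p)"
        using assms by (simp add: mult_monom)
      have "([:a:] + monom 1 (m-1) * J m p) * monom 1 (Suc (degree p)) =
         [:a:] * monom 1 (Suc (degree p)) + J m p * (monom 1 (m-1) * monom 1 (Suc (degree p)))"
        by (simp add: algebra_simps)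
      then show ?thesis unfolding J_pCons d
        by (simp only: e1 e2 mult.left_commute)
    qed
    also have "[\<dots> = monom a (Suc (degree p)) + 1 * reflect_poly p] (mod xm1 m)"
      by (intro cong_add cong_mult cong_refl monom_cong_xm1 pCons)
    also have "monom a (Suc (degree p)) + 1 * reflect_poly p = reflect_poly (pCons a p)"
      using False by (simp add: reflect_poly_pCons')
    finally show ?thesis .
  qed
qed

lemma J_transpose_cong:
  fixes y :: "'a::field_gcd poly"
  assumes "m \<ge> 1" "degree y \<le> m"
  shows "[J m y = transpose_poly m y] (mod xm1 m)"
proof -
  have "[J m y * 1 = J m y * monom 1 m] (mod xm1 m)"
    by (intro cong_mult cong_refl cong_sym[OF monom_cong_xm1])
  also have "J m y * monom 1 m = monom 1 (m - degree y) * (J m y * monom 1 (degree y))"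
    using assms(2) by (simp add: mult_monom algebra_simps)
  also have "[\<dots> = monom 1 (m - degree y) * reflect_poly y] (mod xm1 m)"
    by (intro cong_mult cong_refl J_reflect_cong assms(1))
  finally show ?thesis by (simp add: transpose_poly_def)
qed

lemma prime_dvd_xm1_not_dvd_x:
  fixes f :: "'a::field_gcd poly"
  assumes "prime_elem f" "f dvd xm1 m" "m \<ge> 1"
  shows "\<not> f dvd monom 1 k"
proof
  assume "f dvd monom 1 k"
  then have "f dvd [:0,1:] ^ k" by (simp add: monom_altdef)
  then have "f dvd [:0,1:]" using assms(1) prime_elem_dvd_power by blast
  then have "f dvd [:0,1:] * monom 1 (m-1)" by (rule dvd_mult2)
  also have "[:0,1:] * monom 1 (m-1) = xm1 m + (1::'a poly)"
    using assms(3) by (cases m) (simp_all add: xm1_def monom_Suc)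
  finally have "f dvd 1" using assms(2) by (metis dvd_add_right_iff)
  then show False using assms(1) prime_elem_not_unit by blast
qed

lemma prime_dvd_xm1_coeff0:
  fixes f :: "'a::field_gcd poly"
  assumes "prime_elem f" "f dvd xm1 m" "m \<ge> 1"
  shows "coeff f 0 \<noteq> 0"
proof
  assume "coeff f 0 = 0"
  then have "[:0,1:] dvd f" by (simp add: dvd_iff_poly_eq_0 poly_0_coeff_0)
  then have "[:0,1::'a:] dvd xm1 m" using assms(2) by (rule dvd_trans)
  then have "poly (xm1 m :: 'a poly) 0 = 0" by (simp add: dvd_iff_poly_eq_0)
  moreover have "poly (xm1 m :: 'a poly) 0 = -1" using assms(3)
    by (simp add: poly_0_coeff_0 coeff_xm1)
  ultimately show False by simp
qed

lemma prime_dvd_J_iff: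
  fixes f :: "'a::field_gcd poly"
  assumes "prime_elem f" "f dvd xm1 m" "m \<ge> 1"
  shows "f dvd J m y \<longleftrightarrow> f dvd reflect_poly y"
proof -
  have c: "[J m y * monom 1 (degree y) = reflect_poly y] (mod f)"
    using J_reflect_cong[OF assms(3), of y] assms(2) cong_dvd_modulus by blast
  have cop: "coprime f (monom 1 (degree y))"
    by (rule prime_elem_imp_coprime) (use assms prime_dvd_xm1_not_dvd_x in auto)
  have "f dvd J m y \<longleftrightarrow> f dvd J m y * monom 1 (degree y)"
    using cop by (simp add: coprime_dvd_mult_left_iff)
  also have "\<dots> \<longleftrightarrow> f dvd reflect_poly y" using c by (rule cong_dvd_iff)
  finally show ?thesis .
qed



lemma reflect_x[simp]: "reflect_poly [:0, 1::'a::field_gcd:] = 1"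
  by (simp add: reflect_poly_def)

lemma dvd_reflect_iff:
  fixes f y :: "'a::field_gcd poly"
  assumes "coeff f 0 \<noteq> 0"
  shows "f dvd reflect_poly y \<longleftrightarrow> reflect_poly f dvd y"
proof
  assume "reflect_poly f dvd y"
  then obtain k where "y = reflect_poly f * k" by blast
  then have "reflect_poly y = f * reflect_poly k" using assms by (simp add: reflect_poly_mult)
  then show "f dvd reflect_poly y" by simp
next
  show "f dvd reflect_poly y \<Longrightarrow> reflect_poly f dvd y"
  proof (induct y)
    case 0 then show ?case by simp
  next
    case (pCons a p)
    show ?case
    proof (cases "a = 0")
      case False
      then have "coeff (pCons a p) 0 \<noteq> 0" by simp
      then have "reflect_poly (reflect_poly (pCons a p)) = pCons a p" by simp
      moreover have "reflect_poly f dvd reflect_poly (reflect_poly (pCons a p))"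
        using pCons(3) by (metis dvd_def reflect_poly_mult)
      ultimately show ?thesis by simp
    next
      case True
      have "pCons a p = [:0,1:] * p" using True by simp
      moreover have "reflect_poly ([:0,1:] * p) = reflect_poly p" by (simp only: reflect_poly_mult reflect_x mult_1)
      ultimately have "reflect_poly (pCons a p) = reflect_poly p" by simp
      then have "reflect_poly f dvd p" using pCons by simp
      then have "reflect_poly f dvd [:0,1:] * p" by (rule dvd_mult)
      then show ?thesis using \<open>pCons a p = [:0,1:] * p\<close> by simp
    qed
  qed
qed

lemma reflect_xm1: "m \<ge> 1 \<Longrightarrow> reflect_poly (xm1 m :: 'a::field_gcd poly) = - xm1 m"
  by (rule poly_eqI) (auto simp: coeff_reflect_poly degree_xm1 coeff_xm1)

lemma prime_elem_reflect:
  fixes f :: "'a::field_gcd poly"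
  assumes "prime_elem f" "coeff f 0 \<noteq> 0"
  shows "prime_elem (reflect_poly f)"
proof -
  have f0: "f \<noteq> 0" "\<not> is_unit f" using assms(1) prime_elem_not_unit by auto
  have "degree f \<noteq> 0" using f0 by (auto simp: is_unit_iff_degree)
  then have "\<not> is_unit (reflect_poly f)" using assms(2) f0 by (subst is_unit_iff_degree) auto
  moreover have "reflect_poly f \<noteq> 0" using f0 by simp
  moreover have "reflect_poly f dvd a \<or> reflect_poly f dvd b" if "reflect_poly f dvd a * b" for a b
  proof -
    have "f dvd reflect_poly a * reflect_poly b"
      using that dvd_reflect_iff[OF assms(2), of "a*b"] by (simp add: reflect_poly_mult)
    then have "f dvd reflect_poly a \<or> f dvd reflect_poly b" using assms(1) prime_elem_dvd_mult_iff by blast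
    then show ?thesis using dvd_reflect_iff[OF assms(2)] by blast
  qed
  ultimately show ?thesis by (auto simp: prime_elem_def)
qed

lemma prime_reflect_facts:
  fixes f :: "'a::field_gcd poly"
  assumes "prime_elem f" "f dvd xm1 m" "m \<ge> 1"
  shows "prime_elem (reflect_poly f)" "reflect_poly f dvd xm1 m"
    "reflect_poly (reflect_poly f) = f" "coeff (reflect_poly f) 0 \<noteq> 0"
proof -
  have c: "coeff f 0 \<noteq> 0" by (rule prime_dvd_xm1_coeff0[OF assms])
  show "prime_elem (reflect_poly f)" by (rule prime_elem_reflect[OF assms(1) c])
  have "f dvd reflect_poly (xm1 m)" using assms by (simp add: reflect_xm1)
  then show "reflect_poly f dvd xm1 m" using dvd_reflect_iff[OF c] by blast
  show "reflect_poly (reflect_poly f) = f" using c by simp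
  show "coeff (reflect_poly f) 0 \<noteq> 0" using assms(1) by (auto simp: prime_elem_def)
qed

lemma prime_dvd_J_iff':
  fixes f :: "'a::field_gcd poly"
  assumes "prime_elem f" "f dvd xm1 m" "m \<ge> 1"
  shows "f dvd J m y \<longleftrightarrow> reflect_poly f dvd y"
  using prime_dvd_J_iff[OF assms] dvd_reflect_iff[OF prime_dvd_xm1_coeff0[OF assms]] by simp



lemma of_nat_m_ne0:
  assumes "coprime (card (UNIV :: 'a::{field_gcd,finite} set)) m" "m \<ge> 1"
  shows "(of_nat m :: 'a) \<noteq> 0"
proof
  assume "(of_nat m :: 'a) = 0"
  then have "CHAR('a) dvd m" by (simp add: of_nat_eq_0_iff_char_dvd)
  moreover have "CHAR('a) dvd card (UNIV :: 'a set)" by (rule CHAR_dvd_CARD)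
  ultimately have "CHAR('a) dvd 1" using assms(1) by (metis coprime_common_divisor)
  then show False by simp
qed

lemma xm1_sqfree:
  fixes f :: "'a::{field_gcd,finite} poly"
  assumes "coprime (card (UNIV :: 'a set)) m" "m \<ge> 1" "prime_elem f"
  shows "\<not> f * f dvd xm1 m"
proof
  assume "f * f dvd xm1 m"
  then obtain k where k: "xm1 m = f * f * k" by blast
  have fd: "f dvd xm1 m" using k by simp
  have "pderiv (xm1 m :: 'a poly) = f * (f * pderiv k + k * pderiv f + k * pderiv f)"
    unfolding k by (simp add: pderiv_mult algebra_simps)
  then have "f dvd pderiv (xm1 m :: 'a poly)" by simp
  moreover have "pderiv (xm1 m :: 'a poly) = smult (of_nat m) (monom 1 (m-1))"
    by (simp add: xm1_def pderiv_diff pderiv_monom smult_monom)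
  ultimately have "f dvd smult (of_nat m) (monom 1 (m-1))" by simp
  then have "f dvd monom 1 (m-1)" using of_nat_m_ne0[OF assms(1,2)] by (simp add: dvd_smult_iff)
  then show False using prime_dvd_xm1_not_dvd_x[OF assms(3) fd assms(2)] by blast
qed

lemma sqfree_dvdI:
  fixes s y :: "'a::field_gcd poly"
  assumes "s \<noteq> 0" "\<And>f. prime_elem f \<Longrightarrow> \<not> f * f dvd s"
    "\<And>f. prime_elem f \<Longrightarrow> f dvd s \<Longrightarrow> f dvd y"
  shows "s dvd y"
proof (cases "y = 0")
  case True then show ?thesis by simp
next
  case False
  show ?thesis
  proof (rule multiplicity_le_imp_dvd[OF assms(1)])
    fix p :: "'a poly" assume p: "prime p"
    show "multiplicity p s \<le> multiplicity p y"
    proof (cases "p dvd s")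
      case False then show ?thesis by (simp add: not_dvd_imp_multiplicity_0)
    next
      case True
      have "\<not> p ^ 2 dvd s" using assms(2)[of p] p by (simp add: power2_eq_square)
      moreover have "\<not> is_unit p" using p by (simp add: not_prime_unit)
      ultimately have "multiplicity p s < 2" using assms(1) by (intro multiplicity_lessI) auto
      moreover have "p dvd y" using assms(3)[of p] p True by simp
      then have "multiplicity p y > 0" using False \<open>\<not> is_unit p\<close> by (subst multiplicity_gt_zero_iff) auto
      ultimately show ?thesis by simp
    qed
  qed
qed



lemma mod_xm1_eqI:
  fixes a b :: "'a::field_gcd poly"
  assumes "[a = b] (mod xm1 m)" "degree b < m" "m \<ge> 1"
  shows "a mod xm1 m = b"
proof -
  have "a mod xm1 m = b mod xm1 m" using assms(1) by (simp add: cong_def)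
  also have "b mod xm1 m = b" using assms by (intro mod_poly_less) (simp add: degree_xm1)
  finally show ?thesis .
qed

lemma degree_mod_xm1:
  fixes a :: "'a::field_gcd poly"
  assumes "m \<ge> 1"
  shows "degree (a mod xm1 m) < m"
proof -
  have "a mod xm1 m = 0 \<or> degree (a mod xm1 m) < degree (xm1 m :: 'a poly)"
    using degree_mod_less[OF xm1_ne0[OF assms]] by blast
  then show ?thesis using assms by (auto simp: degree_xm1)
qed

lemma rot1:
  fixes t :: "'a::field_gcd poly"
  assumes "m \<ge> 1" "degree t < m" "i < m"
  shows "coeff ((monom 1 1 * t) mod xm1 m) ((i + 1) mod m) = coeff t i"
proof -
  define c where "c = coeff t (m-1)"
  define w where "w = pCons 0 t - smult c (xm1 m)"
  have deg: "degree w < m"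
  proof -
    have "degree w \<le> m - 1"
    proof (rule degree_le, intro allI impI)
      fix k assume "m - 1 < k"
      then have "k \<ge> m" by simp
      show "coeff w k = 0"
      proof (cases "k = m")
        case True
        obtain m' where m': "m = Suc m'" using assms(1) by (cases m) auto
        show ?thesis using True by (simp add: w_def c_def m' coeff_xm1)
      next
        case False
        then have "k - 1 > degree t" using \<open>k\<ge>m\<close> assms(2) by simp
        then have "coeff t (k - 1) = 0" by (simp add: coeff_eq_0)
        obtain k' where k': "k = Suc k'" using \<open>k\<ge>m\<close> assms(1) by (cases k) auto
        show ?thesis using \<open>coeff t (k - 1) = 0\<close> False \<open>k\<ge>m\<close> assms(1)
          by (simp add: w_def k' coeff_xm1)
      qed
    qed
    then show ?thesis using assms(1) by simp
  qed
  have "[monom 1 1 * t = w] (mod xm1 m)"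
    unfolding w_def by (simp add: cong_iff_dvd_diff monom_Suc dvd_smult)
  then have e: "(monom 1 1 * t) mod xm1 m = w" using deg assms(1) by (rule mod_xm1_eqI)
  show ?thesis
  proof (cases "i + 1 < m")
    case True
    then show ?thesis using e by (simp add: w_def coeff_xm1)
  next
    case False
    then have im: "i + 1 = m" using assms(3) by simp
    then have "i = m - 1" "(i + 1) mod m = 0" by auto
    then show ?thesis using e assms(1) by (simp add: w_def coeff_xm1 c_def)
  qed
qed

lemma rot:
  fixes s :: "'a::field_gcd poly"
  assumes "m \<ge> 1" "degree s < m" "i < m"
  shows "coeff ((monom 1 n * s) mod xm1 m) ((i + n) mod m) = coeff s i"
proof (induct n)
  case 0
  then show ?case using assms by (simp add: mod_poly_less degree_xm1)
next
  case (Suc n)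
  define t where "t = (monom 1 n * s) mod xm1 m"
  have dt: "degree t < m" unfolding t_def by (rule degree_mod_xm1[OF assms(1)])
  have "(monom 1 (Suc n) * s) mod xm1 m = (monom 1 1 * (monom 1 n * s)) mod xm1 m"
  proof -
    have "monom 1 (Suc n) = monom 1 1 * (monom (1::'a) n)" by (simp add: mult_monom)
    then show ?thesis by (simp only: mult.assoc)
  qed
  also have "\<dots> = (monom 1 1 * t) mod xm1 m" unfolding t_def by (simp add: mod_mult_right_eq)
  finally have e: "(monom 1 (Suc n) * s) mod xm1 m = (monom 1 1 * t) mod xm1 m" .
  have im: "(i + n) mod m < m" using assms(1) by simp
  have "(i + Suc n) mod m = ((i + n) mod m + 1) mod m" by (simp add: mod_Suc_eq)
  then have "coeff ((monom 1 (Suc n) * s) mod xm1 m) ((i + Suc n) mod m) = coeff t ((i + n) mod m)"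
    using rot1[OF assms(1) dt im] e by simp
  also have "\<dots> = coeff s i" using Suc unfolding t_def .
  finally show ?case .
qed

lemma rot0:
  fixes s :: "'a::field_gcd poly"
  assumes "m \<ge> 1" "degree s < m" "j < m"
  shows "coeff ((monom 1 ((m-1)*j) * s) mod xm1 m) 0 = coeff s j"
proof -
  have "j + (m-1)*j = m*j" using assms(1) by (cases m) auto
  then have "(j + (m-1)*j) mod m = 0" by simp
  then show ?thesis using rot[OF assms, of "(m-1)*j"] by simp
qed

lemma J_sum:
  fixes b :: "'a::field_gcd poly"
  assumes "degree b < m"
  shows "J m b = (\<Sum>j<m. smult (coeff b j) (monom 1 ((m-1)*j)))"
proof -
  have "b = (\<Sum>j\<le>m - 1. monom (coeff b j) j)" using assms by (simp add: poly_as_sum_of_monoms')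
  also have "{..m-1} = {..<m}" using assms by auto
  finally have "J m b = J m (\<Sum>j<m. monom (coeff b j) j)" by simp
  also have "\<dots> = (\<Sum>j<m. J m (monom (coeff b j) j))"
    by (simp only: J_def pcompose_sum)
  also have "\<dots> = (\<Sum>j<m. smult (coeff b j) (monom 1 ((m-1)*j)))"
  proof (rule sum.cong)
    fix j
    have "monom (coeff b j) j = smult (coeff b j) (monom 1 j)" by (simp add: smult_monom)
    then have "J m (monom (coeff b j) j) = smult (coeff b j) (J m (monom 1 j))"
      by (simp only: J_def pcompose_smult)
    then show "J m (monom (coeff b j) j) = smult (coeff b j) (monom 1 ((m-1)*j))"
      by (simp only: J_monom)
  qed simp
  finally show ?thesis .
qed

lemma ip_single:
  fixes a b :: "'a::field_gcd poly"
  assumes "m \<ge> 1" "degree a < m" "degree b < m"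
  shows "(\<Sum>i<m. coeff a i * coeff b i) = coeff ((a * J m b) mod xm1 m) 0"
proof -
  define S where "S = (\<Sum>j<m. smult (coeff b j) ((monom 1 ((m-1)*j) * a) mod xm1 m))"
  have "a * J m b = (\<Sum>j<m. a * smult (coeff b j) (monom 1 ((m-1)*j)))"
    using J_sum[OF assms(3)] by (simp only: sum_distrib_left)
  also have "\<dots> = (\<Sum>j<m. smult (coeff b j) (monom 1 ((m-1)*j) * a))"
    by (intro sum.cong refl) (simp add: mult.commute)
  finally have e1: "a * J m b = (\<Sum>j<m. smult (coeff b j) (monom 1 ((m-1)*j) * a))" .
  have "[(\<Sum>j<m. smult (coeff b j) (monom 1 ((m-1)*j) * a)) = S] (mod xm1 m)" unfolding S_def
    by (intro cong_sum) (simp add: cong_def mod_smult_left)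
  then have c: "[a * J m b = S] (mod xm1 m)" using e1 by simp
  have "degree S < m" unfolding S_def
  proof (rule degree_sum_less)
    fix j
    show "degree (smult (coeff b j) (monom 1 ((m - 1) * j) * a mod xm1 m)) < m"
      using degree_smult_le degree_mod_xm1[OF assms(1)] le_less_trans by blast
  qed (use assms(1) in simp)
  then have "(a * J m b) mod xm1 m = S" using c assms(1) by (intro mod_xm1_eqI)
  then have "coeff ((a * J m b) mod xm1 m) 0 = (\<Sum>j<m. coeff b j * coeff a j)"
    unfolding S_def by (simp add: coeff_sum) (intro sum.cong refl, simp add: rot0[OF assms(1,2), simplified])
  then show ?thesis by (simp add: mult.commute)
qed



lemma ip_formula:
  fixes u v :: "'a::field_gcd poly \<times> 'a poly"
  assumes "m \<ge> 1" "u \<in> Rm m \<times> Rm m" "v \<in> Rm m \<times> Rm m"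
  shows "euclid_ip m u v = coeff ((fst u * J m (fst v) + snd u * J m (snd v)) mod xm1 m) 0"
proof -
  obtain u1 u2 v1 v2 where uv: "u = (u1,u2)" "v = (v1,v2)" by (cases u, cases v) auto
  have d: "degree u1 < m" "degree u2 < m" "degree v1 < m" "degree v2 < m"
    using assms(2,3) uv by (auto simp: Rm_def)
  define A where "A = (u1 * J m v1) mod xm1 m"
  define B where "B = (u2 * J m v2) mod xm1 m"
  have "[u1 * J m v1 + u2 * J m v2 = A + B] (mod xm1 m)"
    unfolding A_def B_def by (intro cong_add) (simp_all add: cong_def)
  moreover have "degree (A + B) < m" unfolding A_def B_def
    using degree_mod_xm1[OF assms(1)] by (intro degree_add_less) auto
  ultimately have "(u1 * J m v1 + u2 * J m v2) mod xm1 m = A + B"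
    using assms(1) by (intro mod_xm1_eqI)
  then show ?thesis
    using ip_single[OF assms(1) d(1,3)] ip_single[OF assms(1) d(2,4)]
    by (simp add: uv euclid_ip_def A_def B_def)
qed

lemma in_codeI:
  fixes a b :: "'a::field_gcd poly"
  assumes "degree a < m" "degree b < m"
  shows "((a * g11) mod xm1 m, (a * g12 + b * g22) mod xm1 m) \<in> qc_code m g11 g12 g22"
  using assms unfolding qc_code_def Rm_def by blast

lemma code_Rm:
  fixes c :: "'a::field_gcd poly \<times> 'a poly"
  assumes "m \<ge> 1" "c \<in> qc_code m g11 g12 g22"
  shows "c \<in> Rm m \<times> Rm m"
  using assms degree_mod_xm1[OF assms(1)] unfolding qc_code_def Rm_def by auto

lemma rel_imp_dual:
  fixes c :: "'a::field_gcd poly \<times> 'a poly"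
  assumes "m \<ge> 1" "c \<in> Rm m \<times> Rm m"
    "xm1 m dvd fst c * J m g11 + snd c * J m g12" "xm1 m dvd snd c * J m g22"
  shows "c \<in> euclid_dual m (qc_code m g11 g12 g22)"
proof -
  have "euclid_ip m c c' = 0" if c'C: "c' \<in> qc_code m g11 g12 g22" for c'
  proof -
    obtain a b where ab: "c' = ((a * g11) mod xm1 m, (a * g12 + b * g22) mod xm1 m)"
      using c'C unfolding qc_code_def by blast
    have c'R: "c' \<in> Rm m \<times> Rm m" by (rule code_Rm[OF assms(1) c'C])
    have j1: "[J m (fst c') = J m a * J m g11] (mod xm1 m)"
      using J_cong[of "fst c'" "a * g11" m] by (simp add: ab cong_def J_mult)
    have j2: "[J m (snd c') = J m a * J m g12 + J m b * J m g22] (mod xm1 m)"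
      using J_cong[of "snd c'" "a * g12 + b * g22" m] by (simp add: ab cong_def J_mult J_add)
    have "[fst c * J m (fst c') + snd c * J m (snd c') =
           fst c * (J m a * J m g11) + snd c * (J m a * J m g12 + J m b * J m g22)] (mod xm1 m)"
      by (intro cong_add cong_mult cong_refl j1 j2)
    also have "fst c * (J m a * J m g11) + snd c * (J m a * J m g12 + J m b * J m g22) =
       J m a * (fst c * J m g11 + snd c * J m g12) + J m b * (snd c * J m g22)"
      by (simp add: algebra_simps)
    also have "[\<dots> = 0] (mod xm1 m)" using assms(3,4) by (simp add: cong_0_iff)
    finally have "(fst c * J m (fst c') + snd c * J m (snd c')) mod xm1 m = 0"
      by (simp add: cong_def)
    then show ?thesis using ip_formula[OF assms(1,2) c'R] by simp
  qed
  then show ?thesis using assms(2) unfolding euclid_dual_def by blast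
qed

lemma dual_imp_rel_gen:
  fixes c :: "'a::field_gcd poly \<times> 'a poly"
  assumes "m \<ge> 1" "c \<in> Rm m \<times> Rm m"
    "\<And>k. k < m \<Longrightarrow> euclid_ip m c ((monom 1 k * u) mod xm1 m, (monom 1 k * v) mod xm1 m) = 0"
  shows "xm1 m dvd fst c * J m u + snd c * J m v"
proof -
  define P where "P = fst c * J m u + snd c * J m v"
  define Q where "Q = P mod xm1 m"
  have dQ: "degree Q < m" unfolding Q_def by (rule degree_mod_xm1[OF assms(1)])
  have "coeff Q k = 0" for k
  proof (cases "k < m")
    case False then show ?thesis using dQ by (simp add: coeff_eq_0)
  next
    case True
    define c' where "c' = ((monom 1 k * u) mod xm1 m, (monom 1 k * v) mod xm1 m)"
    have c'R: "c' \<in> Rm m \<times> Rm m" unfolding c'_def Rm_def using degree_mod_xm1[OF assms(1)] by auto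
    have j1: "[J m (fst c') = monom 1 ((m-1)*k) * J m u] (mod xm1 m)"
      using J_cong[of "fst c'" "monom 1 k * u" m] by (simp add: c'_def cong_def J_mult J_monom)
    have j2: "[J m (snd c') = monom 1 ((m-1)*k) * J m v] (mod xm1 m)"
      using J_cong[of "snd c'" "monom 1 k * v" m] by (simp add: c'_def cong_def J_mult J_monom)
    have "[fst c * J m (fst c') + snd c * J m (snd c') =
           fst c * (monom 1 ((m-1)*k) * J m u) + snd c * (monom 1 ((m-1)*k) * J m v)] (mod xm1 m)"
      by (intro cong_add cong_mult cong_refl j1 j2)
    also have "fst c * (monom 1 ((m-1)*k) * J m u) + snd c * (monom 1 ((m-1)*k) * J m v)
       = monom 1 ((m-1)*k) * P" by (simp add: P_def algebra_simps)
    also have "[monom 1 ((m-1)*k) * P = monom 1 ((m-1)*k) * Q] (mod xm1 m)"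
      unfolding Q_def by (intro cong_mult cong_refl) (simp add: cong_def)
    finally have "(fst c * J m (fst c') + snd c * J m (snd c')) mod xm1 m =
        (monom 1 ((m-1)*k) * Q) mod xm1 m" by (simp add: cong_def)
    then have "euclid_ip m c c' = coeff ((monom 1 ((m-1)*k) * Q) mod xm1 m) 0"
      using ip_formula[OF assms(1,2) c'R] by simp
    also have "\<dots> = coeff Q k" by (rule rot0[OF assms(1) dQ True])
    finally show ?thesis using assms(3)[OF True] by (simp add: c'_def)
  qed
  then have "Q = 0" by (simp add: poly_eq_iff)
  then show ?thesis unfolding Q_def P_def by (simp add: mod_eq_0_iff_dvd)
qed

lemma dual_imp_rel:
  fixes c :: "'a::field_gcd poly \<times> 'a poly"
  assumes "m \<ge> 1" "c \<in> euclid_dual m (qc_code m g11 g12 g22)"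
  shows "xm1 m dvd fst c * J m g11 + snd c * J m g12" "xm1 m dvd snd c * J m g22"
proof -
  have cR: "c \<in> Rm m \<times> Rm m" and orth: "\<And>c'. c' \<in> qc_code m g11 g12 g22 \<Longrightarrow> euclid_ip m c c' = 0"
    using assms(2) unfolding euclid_dual_def by auto
  show "xm1 m dvd fst c * J m g11 + snd c * J m g12"
  proof (rule dual_imp_rel_gen[OF assms(1) cR])
    fix k assume "k < m"
    have "((monom 1 k * g11) mod xm1 m, (monom 1 k * g12 + 0 * g22) mod xm1 m) \<in> qc_code m g11 g12 g22"
      using \<open>k < m\<close> by (intro in_codeI) (auto simp: degree_monom_eq)
    then show "euclid_ip m c ((monom 1 k * g11) mod xm1 m, (monom 1 k * g12) mod xm1 m) = 0"
      using orth by simp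
  qed
  have "xm1 m dvd fst c * J m 0 + snd c * J m g22"
  proof (rule dual_imp_rel_gen[OF assms(1) cR])
    fix k assume "k < m"
    have "((0 * g11) mod xm1 m, (0 * g12 + monom 1 k * g22) mod xm1 m) \<in> qc_code m g11 g12 g22"
      using \<open>k < m\<close> by (intro in_codeI) (auto simp: degree_monom_eq)
    then show "euclid_ip m c ((monom 1 k * 0) mod xm1 m, (monom 1 k * g22) mod xm1 m) = 0"
      using orth by simp
  qed
  then show "xm1 m dvd snd c * J m g22" by simp
qed



locale qcset =
  fixes g11 g12 g22 g l g11' g22' r11 t11 r22 t22 :: "'a::{field_gcd,finite} poly"
    and m :: nat
  assumes m1: "m \<ge> 1"
    and cop: "coprime (card (UNIV :: 'a set)) m"
    and d11: "g11 dvd xm1 m" and d22: "g22 dvd xm1 m"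
    and deg12: "g12 = 0 \<or> degree g12 < degree g22"
    and d1122: "g11 * g22 dvd xm1 m * g12"
    and g_def: "g = gcd g11 g22"
    and l_def: "l = xm1 m div lcm g11 g22"
    and g11'_def: "g11 = g * g11'" and g22'_def: "g22 = g * g22'"
    and r11_def: "r11 = gcd g11' (reflect_poly g11')" and t11_def: "t11 = g11' div r11"
    and r22_def: "r22 = gcd g22' (reflect_poly g22')" and t22_def: "t22 = g22' div r22"
begin

abbreviation "X \<equiv> (xm1 m :: 'a poly)"
abbreviation "PX f \<equiv> prime_elem f \<and> f dvd X"

lemma X0: "X \<noteq> 0" by (rule xm1_ne0[OF m1])
lemma g11_0: "g11 \<noteq> 0" using d11 X0 by auto
lemma g22_0: "g22 \<noteq> 0" using d22 X0 by auto

lemma sq: "prime_elem f \<Longrightarrow> \<not> f * f dvd X"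
  by (rule xm1_sqfree[OF cop m1])

lemma sq_dvd: "prime_elem f \<Longrightarrow> s dvd X \<Longrightarrow> \<not> f * f dvd s"
  using sq dvd_trans by blast

lemma Jiff: "PX f \<Longrightarrow> f dvd J m y \<longleftrightarrow> reflect_poly f dvd y"
  using prime_dvd_J_iff'[OF _ _ m1] by blast

lemma Rf: "PX f \<Longrightarrow> PX (reflect_poly f)"
  using prime_reflect_facts[OF _ _ m1] by blast

lemma RRf: "PX f \<Longrightarrow> reflect_poly (reflect_poly f) = f"
  using prime_reflect_facts[OF _ _ m1] by blast

lemma Riff: "PX f \<Longrightarrow> f dvd reflect_poly y \<longleftrightarrow> reflect_poly f dvd y"
  using dvd_reflect_iff prime_dvd_xm1_coeff0[OF _ _ m1] by blast

lemma prime_split: "prime_elem f \<Longrightarrow> f dvd a * b \<longleftrightarrow> f dvd a \<or> f dvd b"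
  by (rule prime_elem_dvd_mult_iff)

lemma K1: "f dvd g \<longleftrightarrow> f dvd g11 \<and> f dvd g22"
  by (simp add: g_def)

lemma lcm_dvd: "lcm g11 g22 dvd X" using d11 d22 by (rule lcm_least)
lemma X_eq: "X = l * lcm g11 g22" unfolding l_def using lcm_dvd by simp
lemma l_dvd: "l dvd X" using X_eq by simp

lemma K2: assumes "PX f" shows "f dvd l \<longleftrightarrow> \<not> f dvd g11 \<and> \<not> f dvd g22"
proof
  assume fl: "f dvd l"
  have "\<not> f dvd g11"
  proof
    assume "f dvd g11"
    then have "f dvd lcm g11 g22" using dvd_lcm1 dvd_trans by blast
    then have "f * f dvd X" using fl X_eq by (simp add: mult_dvd_mono)
    then show False using sq assms by blast
  qed
  moreover have "\<not> f dvd g22"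
  proof
    assume "f dvd g22"
    then have "f dvd lcm g11 g22" using dvd_lcm2 dvd_trans by blast
    then have "f * f dvd X" using fl X_eq by (simp add: mult_dvd_mono)
    then show False using sq assms by blast
  qed
  ultimately show "\<not> f dvd g11 \<and> \<not> f dvd g22" by blast
next
  assume n: "\<not> f dvd g11 \<and> \<not> f dvd g22"
  have "lcm g11 g22 dvd g11 * g22" by (rule lcm_least) simp_all
  then have "\<not> f dvd lcm g11 g22" using n assms prime_split dvd_trans by blast
  then show "f dvd l" using assms X_eq prime_split by metis
qed

lemma K3: assumes "prime_elem f" "f dvd g11" "f dvd g22" shows "f dvd g12"
proof (rule ccontr)
  assume "\<not> f dvd g12"
  then have "coprime f g12" using assms(1) prime_elem_imp_coprime by blast
  then have "coprime (f * f) g12" by simp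
  moreover have "f * f dvd X * g12" using assms d1122 by (metis dvd_trans mult_dvd_mono)
  ultimately have "f * f dvd X" using coprime_dvd_mult_left_iff by blast
  then show False using sq assms(1) by blast
qed

lemma g0: "g \<noteq> 0" using g11_0 by (simp add: g_def)

lemma K4a: assumes "prime_elem f" "f dvd g22" shows "f dvd g22' \<longleftrightarrow> \<not> f dvd g"
proof
  assume "f dvd g22'"
  show "\<not> f dvd g"
  proof
    assume "f dvd g"
    then have "f * f dvd g22" using \<open>f dvd g22'\<close> g22'_def by (simp add: mult_dvd_mono)
    then show False using sq_dvd[OF assms(1) d22] by blast
  qed
next
  assume "\<not> f dvd g" then show "f dvd g22'" using assms g22'_def prime_split by metis
qed

lemma K4b: assumes "prime_elem f" "f dvd g11" shows "f dvd g11' \<longleftrightarrow> \<not> f dvd g"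
proof
  assume "f dvd g11'"
  show "\<not> f dvd g"
  proof
    assume "f dvd g"
    then have "f * f dvd g11" using \<open>f dvd g11'\<close> g11'_def by (simp add: mult_dvd_mono)
    then show False using sq_dvd[OF assms(1) d11] by blast
  qed
next
  assume "\<not> f dvd g" then show "f dvd g11'" using assms g11'_def prime_split by metis
qed

lemma g22'_dvd: "g22' dvd g22" using g22'_def by simp
lemma g22'_dvdX: "g22' dvd X" using g22'_dvd d22 dvd_trans by blast

lemma r22_dvd: "r22 dvd g22'" by (simp add: r22_def)
lemma g22'_eq: "g22' = r22 * t22" using r22_dvd by (simp add: t22_def)

lemma K5: assumes "prime_elem f"
  shows "f dvd t22 \<longleftrightarrow> f dvd g22' \<and> \<not> f dvd reflect_poly g22'"
proof
  assume ft: "f dvd t22"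
  then have fg: "f dvd g22'" using g22'_eq by simp
  moreover have "\<not> f dvd reflect_poly g22'"
  proof
    assume "f dvd reflect_poly g22'"
    then have "f dvd r22" using fg by (simp add: r22_def)
    then have "f * f dvd g22'" using ft g22'_eq by (simp add: mult_dvd_mono)
    then show False using sq_dvd[OF assms g22'_dvdX] by blast
  qed
  ultimately show "f dvd g22' \<and> \<not> f dvd reflect_poly g22'" by blast
next
  assume a: "f dvd g22' \<and> \<not> f dvd reflect_poly g22'"
  then have "\<not> f dvd r22" by (metis r22_def dvd_trans gcd_dvd2)
  then show "f dvd t22" using a g22'_eq assms prime_split by metis
qed

lemma K6: "f dvd r22 \<longleftrightarrow> f dvd g22' \<and> f dvd reflect_poly g22'"
  by (simp add: r22_def)

lemma SR:
  assumes "s dvd X"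
  shows "self_reciprocal s \<longleftrightarrow> (\<forall>f. PX f \<longrightarrow> f dvd s \<longrightarrow> reflect_poly f dvd s)"
proof -
  have s0: "s \<noteq> 0" using assms X0 by auto
  have "self_reciprocal s \<longleftrightarrow> s dvd reflect_poly s"
  proof
    assume "self_reciprocal s"
    then obtain \<alpha> where "reflect_poly s = smult \<alpha> s" by (auto simp: self_reciprocal_def)
    then show "s dvd reflect_poly s" by (simp add: dvd_smult)
  next
    assume "s dvd reflect_poly s"
    then obtain k where k: "reflect_poly s = s * k" by blast
    have k0: "k \<noteq> 0" using k s0 by auto
    have "degree (s * k) \<le> degree s" using degree_reflect_poly_le[of s] k by simp
    then have "degree k = 0" using s0 k0 by (simp add: degree_mult_eq)
    then obtain \<alpha> where "k = [:\<alpha>:]" by (meson degree_eq_zeroE)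
    then have "reflect_poly s = smult \<alpha> s" using k by simp
    then show "self_reciprocal s" using s0 by (auto simp: self_reciprocal_def)
  qed
  also have "\<dots> \<longleftrightarrow> (\<forall>f. prime_elem f \<longrightarrow> f dvd s \<longrightarrow> f dvd reflect_poly s)"
  proof
    assume "s dvd reflect_poly s" then show "\<forall>f. prime_elem f \<longrightarrow> f dvd s \<longrightarrow> f dvd reflect_poly s"
      using dvd_trans by blast
  next
    assume "\<forall>f. prime_elem f \<longrightarrow> f dvd s \<longrightarrow> f dvd reflect_poly s"
    then show "s dvd reflect_poly s"
      using sqfree_dvdI[OF s0] sq_dvd[OF _ assms] by blast
  qed
  also have "\<dots> \<longleftrightarrow> (\<forall>f. PX f \<longrightarrow> f dvd s \<longrightarrow> reflect_poly f dvd s)"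
    using Riff assms dvd_trans by blast
  finally show ?thesis .
qed

end



context qcset begin

abbreviation "J11 \<equiv> J m g11"
abbreviation "J12 \<equiv> J m g12"
abbreviation "J22 \<equiv> J m g22"
abbreviation "S \<equiv> g11 * transpose_poly m g11 + g12 * transpose_poly m g12"

lemma degX: "degree X = m" by (rule degree_xm1[OF m1])
lemma deg11: "degree g11 \<le> m" using dvd_imp_degree_le[OF d11 X0] degX by simp
lemma deg22: "degree g22 \<le> m" using dvd_imp_degree_le[OF d22 X0] degX by simp
lemma deg12m: "degree g12 \<le> m" using deg12 deg22 by auto

lemma JT_cong: "[g11 * J11 + g12 * J12 = S] (mod X)"
  by (intro cong_add cong_mult cong_refl J_transpose_cong[OF m1] deg11 deg12m)

lemma JT: "f dvd X \<Longrightarrow> f dvd g11 * J11 + g12 * J12 \<longleftrightarrow> f dvd S"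
  using JT_cong cong_dvd_modulus cong_dvd_iff by blast

lemma local_zero:
  assumes I: "\<forall>f. PX f \<longrightarrow> f dvd g \<longrightarrow> reflect_poly f dvd g"
    and II: "\<forall>f. PX f \<longrightarrow> f dvd l \<longrightarrow> reflect_poly f dvd l"
    and III: "\<forall>f. prime_elem f \<longrightarrow> f dvd t22 \<longrightarrow> \<not> f dvd g12"
    and IV: "\<forall>f. prime_elem f \<longrightarrow> f dvd r22 \<longrightarrow> \<not> f dvd S"
    and f: "PX f"
    and r1: "f dvd (a * g11) * J11 + (a * g12 + b * g22) * J12"
    and r2: "f dvd (a * g12 + b * g22) * J22"
  shows "f dvd a * g11 \<and> f dvd a * g12 + b * g22"
proof -
  define f' where "f' = reflect_poly f"
  have f': "PX f'" "reflect_poly f' = f" using Rf[OF f] RRf[OF f] by (auto simp: f'_def)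
  have pf: "prime_elem f" using f by blast
  have pf': "prime_elem f'" using f' by blast
  have Jf: "\<And>y. f dvd J m y \<longleftrightarrow> f' dvd y" using Jiff[OF f] by (simp add: f'_def)
  have Ig: "f dvd g \<longleftrightarrow> f' dvd g" using I f f' by (metis f'_def)
  have Il: "f dvd l \<longleftrightarrow> f' dvd l" using II f f' by (metis f'_def)
  have K2f: "f dvd l \<longleftrightarrow> \<not> f dvd g11 \<and> \<not> f dvd g22" using K2[OF f] .
  have K2f': "f' dvd l \<longleftrightarrow> \<not> f' dvd g11 \<and> \<not> f' dvd g22" using K2[OF f'(1)] .
  show ?thesis
  proof (cases "f dvd g11")
    case True
    note f11 = True
    show ?thesis
    proof (cases "f dvd g22")
      case True
      then have "f dvd g12" using K3[OF pf f11] by blast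
      then show ?thesis using f11 True by simp
    next
      case False
      have e1: "f dvd a * g11" using f11 by simp
      have nfg: "\<not> f dvd g" using False K1 by blast
      have nfl: "\<not> f dvd l" using K2f f11 by blast
      have "\<not> f' dvd g" "\<not> f' dvd l" using nfg nfl Ig Il by blast+
      then have "(f' dvd g11 \<and> \<not> f' dvd g22) \<or> (f' dvd g22 \<and> \<not> f' dvd g11)"
        using K2f' K1 by blast
      then show ?thesis
      proof
        assume "f' dvd g11 \<and> \<not> f' dvd g22"
        then have "\<not> f dvd J22" using Jf by blast
        then have "f dvd a * g12 + b * g22" using r2 pf prime_split by blast
        then show ?thesis using e1 by blast
      next
        assume a2: "f' dvd g22 \<and> \<not> f' dvd g11"
        have "f' dvd g22'" using K4a[OF pf'] a2 \<open>\<not> f' dvd g\<close> by blast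
        moreover have "\<not> f dvd g22'" using False g22'_dvd dvd_trans by blast
        then have "\<not> f' dvd reflect_poly g22'" using Riff[OF f'(1)] f'(2) by simp
        ultimately have "f' dvd t22" using K5[OF pf'] by blast
        then have "\<not> f' dvd g12" using III pf' by blast
        then have "\<not> f dvd J12" using Jf by blast
        moreover have "f dvd (a * g12 + b * g22) * J12"
          using r1 e1 by (metis dvd_add_right_iff dvd_mult2)
        ultimately have "f dvd a * g12 + b * g22" using pf prime_split by blast
        then show ?thesis using e1 by blast
      qed
    qed
  next
    case False
    note nf11 = False
    show ?thesis
    proof (cases "f dvd g22")
      case False
      then have "f dvd l" using K2f nf11 by blast
      then have "f' dvd l" using Il by blast
      then have "\<not> f dvd J22" "\<not> f dvd J11" using K2f' Jf by blast+
      then have e2: "f dvd a * g12 + b * g22" using r2 pf prime_split by blast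
      then have "f dvd (a * g11) * J11" using r1 by (metis dvd_add_left_iff dvd_mult2)
      then have "f dvd a * g11" using \<open>\<not> f dvd J11\<close> pf prime_split by blast
      then show ?thesis using e2 by blast
    next
      case True
      note f22 = True
      have nfg: "\<not> f dvd g" using nf11 K1 by blast
      have nfl: "\<not> f dvd l" using K2f f22 by blast
      have "\<not> f' dvd g" "\<not> f' dvd l" using nfg nfl Ig Il by blast+
      then have c: "(f' dvd g11 \<and> \<not> f' dvd g22) \<or> (f' dvd g22 \<and> \<not> f' dvd g11)"
        using K2f' K1 by blast
      have fg22': "f dvd g22'" using K4a[OF pf f22] nfg by blast
      have e2a: "f dvd a * g12 + b * g22 \<longleftrightarrow> f dvd a * g12"
        using f22 by (metis dvd_add_left_iff dvd_mult)
      from c show ?thesis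
      proof
        assume a1: "f' dvd g11 \<and> \<not> f' dvd g22"
        then have "\<not> f dvd J22" using Jf by blast
        then have e2: "f dvd a * g12 + b * g22" using r2 pf prime_split by blast
        have "\<not> f' dvd g22'" using a1 g22'_dvd dvd_trans by blast
        then have "\<not> f dvd reflect_poly g22'" using Riff[OF f] f'_def by simp
        then have "f dvd t22" using K5[OF pf] fg22' by blast
        then have "\<not> f dvd g12" using III pf by blast
        moreover have "f dvd a * g12" using e2 e2a by blast
        ultimately have "f dvd a" using pf prime_split by blast
        then show ?thesis using e2 by simp
      next
        assume a1: "f' dvd g22 \<and> \<not> f' dvd g11"
        have "f' dvd g22'" using K4a[OF pf'] a1 \<open>\<not> f' dvd g\<close> by blast
        then have "f dvd reflect_poly g22'" using Riff[OF f] f'_def by simp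
        then have "f dvd r22" using K6 fg22' by blast
        then have "\<not> f dvd S" using IV pf by blast
        then have nS: "\<not> f dvd g11 * J11 + g12 * J12" using JT f by blast
        have "(a * g11) * J11 + (a * g12 + b * g22) * J12 = a * (g11 * J11 + g12 * J12) + g22 * (b * J12)"
          by (simp add: algebra_simps)
        then have "f dvd a * (g11 * J11 + g12 * J12)" using r1 f22
          by (metis dvd_add_left_iff dvd_mult2)
        then have "f dvd a" using nS pf prime_split by blast
        then show ?thesis using f22 by simp
      qed
    qed
  qed
qed

end



context qcset begin

abbreviation "C \<equiv> qc_code m g11 g12 g22"

lemma zero_in: "(0, 0) \<in> C \<inter> euclid_dual m C"
proof -
  have "((0 * g11) mod X, (0 * g12 + 0 * g22) mod X) \<in> C"
    using m1 by (intro in_codeI) auto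
  then have a: "(0,0) \<in> C" by simp
  have "(0,0) \<in> Rm m \<times> Rm m" using m1 by (auto simp: Rm_def)
  then have "(0,0) \<in> euclid_dual m C" using m1 by (intro rel_imp_dual) auto
  then show ?thesis using a by blast
qed

lemma bwd:
  assumes sg: "self_reciprocal g" and sl: "self_reciprocal l"
    and g3: "gcd t22 g12 = 1" and g4: "gcd r22 S = 1"
  shows "euclid_LCD m C"
proof -
  have gX: "g dvd X" unfolding g_def using gcd_dvd1 d11 by (rule dvd_trans)
  have I: "\<forall>f. PX f \<longrightarrow> f dvd g \<longrightarrow> reflect_poly f dvd g" using SR[OF gX] sg by blast
  have II: "\<forall>f. PX f \<longrightarrow> f dvd l \<longrightarrow> reflect_poly f dvd l" using SR[OF l_dvd] sl by blast
  have III: "\<forall>f. prime_elem f \<longrightarrow> f dvd t22 \<longrightarrow> \<not> f dvd g12"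
  proof (intro allI impI notI)
    fix f assume "prime_elem f" "f dvd t22" "f dvd g12"
    then have "f dvd gcd t22 g12" by simp
    then have "is_unit f" using g3 by simp
    then show False using \<open>prime_elem f\<close> prime_elem_not_unit by blast
  qed
  have IV: "\<forall>f. prime_elem f \<longrightarrow> f dvd r22 \<longrightarrow> \<not> f dvd S"
  proof (intro allI impI notI)
    fix f assume "prime_elem f" "f dvd r22" "f dvd S"
    then have "f dvd gcd r22 S" by simp
    then have "is_unit f" using g4 by simp
    then show False using \<open>prime_elem f\<close> prime_elem_not_unit by blast
  qed
  have "c = (0,0)" if cC: "c \<in> C" and cD: "c \<in> euclid_dual m C" for c
  proof -
    obtain a b where ab: "c = ((a * g11) mod X, (a * g12 + b * g22) mod X)"
      using cC unfolding qc_code_def by blast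
    have r1: "X dvd fst c * J11 + snd c * J12" and r2: "X dvd snd c * J22"
      using dual_imp_rel[OF m1 cD] by auto
    have c1: "[fst c = a * g11] (mod X)" and c2: "[snd c = a * g12 + b * g22] (mod X)"
      by (simp_all add: ab cong_def)
    have "[fst c * J11 + snd c * J12 = (a * g11) * J11 + (a * g12 + b * g22) * J12] (mod X)"
      by (intro cong_add cong_mult cong_refl c1 c2)
    then have R1: "X dvd (a * g11) * J11 + (a * g12 + b * g22) * J12" using r1 cong_dvd_iff by blast
    have "[snd c * J22 = (a * g12 + b * g22) * J22] (mod X)"
      by (intro cong_mult cong_refl c2)
    then have R2: "X dvd (a * g12 + b * g22) * J22" using r2 cong_dvd_iff by blast
    have loc: "f dvd a * g11 \<and> f dvd a * g12 + b * g22" if "prime_elem f" "f dvd X" for f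
      using local_zero[OF I II III IV, of f a b] that R1 R2 dvd_trans by blast
    have "X dvd a * g11" using sqfree_dvdI[OF X0] sq loc by blast
    moreover have "X dvd a * g12 + b * g22" using sqfree_dvdI[OF X0] sq loc by blast
    ultimately show ?thesis using ab by (simp add: mod_eq_0_iff_dvd)
  qed
  then show ?thesis using zero_in unfolding euclid_LCD_def by blast
qed

lemma wit_global:
  assumes lcd: "euclid_LCD m C"
    and R1: "X dvd (a * g11) * J11 + (a * g12 + b * g22) * J12"
    and R2: "X dvd (a * g12 + b * g22) * J22"
  shows "X dvd a * g11 \<and> X dvd a * g12 + b * g22"
proof -
  define c where "c = ((a * g11) mod X, (a * g12 + b * g22) mod X)"
  have "((a mod X) * g11 mod X, ((a mod X) * g12 + (b mod X) * g22) mod X) \<in> C"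
    by (intro in_codeI degree_mod_xm1 m1)
  moreover have "((a mod X) * g11 mod X, ((a mod X) * g12 + (b mod X) * g22) mod X) = c"
  proof -
    have "[a mod X * g12 + b mod X * g22 = a * g12 + b * g22] (mod X)"
      by (intro cong_add cong_mult cong_refl) (simp_all add: cong_def)
    moreover have "[a mod X * g11 = a * g11] (mod X)"
      by (intro cong_mult cong_refl) (simp_all add: cong_def)
    ultimately show ?thesis unfolding c_def by (simp add: cong_def)
  qed
  ultimately have cC: "c \<in> C" by simp
  have c1: "[fst c = a * g11] (mod X)" and c2: "[snd c = a * g12 + b * g22] (mod X)"
    by (simp_all add: c_def cong_def)
  have "[fst c * J11 + snd c * J12 = (a * g11) * J11 + (a * g12 + b * g22) * J12] (mod X)"
    by (intro cong_add cong_mult cong_refl c1 c2)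
  then have r1: "X dvd fst c * J11 + snd c * J12" using R1 cong_dvd_iff by blast
  have "[snd c * J22 = (a * g12 + b * g22) * J22] (mod X)"
    by (intro cong_mult cong_refl c2)
  then have r2: "X dvd snd c * J22" using R2 cong_dvd_iff by blast
  have cR: "c \<in> Rm m \<times> Rm m" using code_Rm[OF m1 cC] .
  have "c \<in> euclid_dual m C" by (rule rel_imp_dual[OF m1 cR r1 r2])
  then have "c = (0,0)" using cC lcd unfolding euclid_LCD_def by blast
  then show ?thesis by (simp add: c_def mod_eq_0_iff_dvd)
qed

lemma wit:
  assumes lcd: "euclid_LCD m C" and p: "PX p"
    and R1: "p dvd (a * g11) * J11 + (a * g12 + b * g22) * J12"
    and R2: "p dvd (a * g12 + b * g22) * J22"
  shows "p dvd a * g11 \<and> p dvd a * g12 + b * g22"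
proof -
  define h where "h = X div p"
  have Xh: "X = h * p" using p by (simp add: h_def)
  have h0: "h \<noteq> 0" using Xh X0 by auto
  have key: "X dvd h * z \<longleftrightarrow> p dvd z" for z
    using h0 by (simp add: Xh mult.commute)
  have "X dvd (h * a * g11) * J11 + (h * a * g12 + h * b * g22) * J12"
    using R1 key[of "(a * g11) * J11 + (a * g12 + b * g22) * J12"] by (simp add: algebra_simps)
  moreover have "X dvd (h * a * g12 + h * b * g22) * J22"
    using R2 key[of "(a * g12 + b * g22) * J22"] by (simp add: algebra_simps)
  ultimately have "X dvd (h * a) * g11 \<and> X dvd (h * a) * g12 + (h * b) * g22"
    using wit_global[OF lcd, of "h * a" "h * b"] by (simp add: mult.assoc)
  then show ?thesis using key[of "a * g11"] key[of "a * g12 + b * g22"] by (simp add: algebra_simps)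
qed

end



context qcset begin

lemma fI:
  assumes lcd: "euclid_LCD m C"
  shows "self_reciprocal g"
proof -
  have gX: "g dvd X" unfolding g_def using gcd_dvd1 d11 by (rule dvd_trans)
  have "reflect_poly f dvd g" if f: "PX f" and fg: "f dvd g" for f
  proof (rule ccontr)
    assume nfg: "\<not> reflect_poly f dvd g"
    define p where "p = reflect_poly f"
    have p: "PX p" "reflect_poly p = f" using Rf[OF f] RRf[OF f] by (auto simp: p_def)
    have Jp: "\<And>y. p dvd J m y \<longleftrightarrow> f dvd y" using Jiff[OF p(1)] p(2) by simp
    have f11: "f dvd g11" and f22: "f dvd g22" using fg K1 by auto
    have f12: "f dvd g12" using K3 f f11 f22 by blast
    have j: "p dvd J11" "p dvd J12" "p dvd J22" using Jp f11 f12 f22 by auto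
    have "\<not> p dvd g11 \<or> \<not> p dvd g22" using nfg K1 p_def by blast
    then show False
    proof
      assume n: "\<not> p dvd g11"
      have "p dvd (1 * g11) * J11 + (1 * g12 + 0 * g22) * J12" using j by simp
      moreover have "p dvd (1 * g12 + 0 * g22) * J22" using j by simp
      ultimately have "p dvd 1 * g11" using wit[OF lcd p(1)] by blast
      then show False using n by simp
    next
      assume n: "\<not> p dvd g22"
      have "p dvd (0 * g11) * J11 + (0 * g12 + 1 * g22) * J12" using j by simp
      moreover have "p dvd (0 * g12 + 1 * g22) * J22" using j by simp
      ultimately have "p dvd 0 * g12 + 1 * g22" using wit[OF lcd p(1)] by blast
      then show False using n by simp
    qed
  qed
  then show ?thesis using SR[OF gX] by blast
qed

lemma fII:
  assumes lcd: "euclid_LCD m C"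
  shows "self_reciprocal l"
proof -
  have "reflect_poly f dvd l" if f: "PX f" and fl: "f dvd l" for f
  proof (rule ccontr)
    assume nfl: "\<not> reflect_poly f dvd l"
    define f' where "f' = reflect_poly f"
    have f': "PX f'" using Rf[OF f] by (simp add: f'_def)
    have pf: "prime_elem f" using f by blast
    have Jf: "\<And>y. f dvd J m y \<longleftrightarrow> f' dvd y" using Jiff[OF f] by (simp add: f'_def)
    have n11: "\<not> f dvd g11" and n22: "\<not> f dvd g22" using K2[OF f] fl by auto
    have "f' dvd g11 \<or> f' dvd g22" using K2[OF f'] nfl f'_def by blast
    then show False
    proof
      assume "f' dvd g22"
      then have j22: "f dvd J22" using Jf by blast
      show False
      proof (cases "f dvd J11 \<and> f dvd J12")
        case True
        have "f dvd (1 * g11) * J11 + (1 * g12 + 0 * g22) * J12" using True by simp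
        moreover have "f dvd (1 * g12 + 0 * g22) * J22" using j22 by simp
        ultimately have "f dvd 1 * g11" using wit[OF lcd f] by blast
        then show False using n11 by simp
      next
        case False
        define a where "a = g22 * J12"
        define b where "b = - (g11 * J11 + g12 * J12)"
        have e1: "(a * g11) * J11 + (a * g12 + b * g22) * J12 = 0"
          by (simp add: a_def b_def algebra_simps)
        have e2: "a * g12 + b * g22 = - (g22 * (g11 * J11))"
          by (simp add: a_def b_def algebra_simps)
        have "f dvd (a * g11) * J11 + (a * g12 + b * g22) * J12" using e1 by simp
        moreover have "f dvd (a * g12 + b * g22) * J22" using j22 by simp
        ultimately have w: "f dvd a * g11 \<and> f dvd a * g12 + b * g22" using wit[OF lcd f] by blast
        then have "f dvd g22 * J12 * g11" using a_def by simp
        then have "f dvd J12" using pf n11 n22 prime_split by blast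
        moreover have "f dvd g22 * (g11 * J11)" using w e2 by simp
        then have "f dvd J11" using pf n11 n22 prime_split by blast
        ultimately show False using False by blast
      qed
    next
      assume "f' dvd g11"
      then have j11: "f dvd J11" using Jf by blast
      have "f dvd (g22 * g11) * J11 + (g22 * g12 + (- g12) * g22) * J12" using j11 by simp
      moreover have "f dvd (g22 * g12 + (- g12) * g22) * J22" by simp
      ultimately have "f dvd g22 * g11" using wit[OF lcd f] by blast
      then show False using pf n11 n22 prime_split by blast
    qed
  qed
  then show ?thesis using SR[OF l_dvd] by blast
qed

lemma t22_0: "t22 \<noteq> 0"
proof -
  have "g22' \<noteq> 0" using g22_0 g22'_def by auto
  then show ?thesis using g22'_eq by auto
qed

lemma fIII:
  assumes lcd: "euclid_LCD m C"
  shows "gcd t22 g12 = 1"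
proof (rule ccontr)
  assume ne: "gcd t22 g12 \<noteq> 1"
  have "gcd t22 g12 \<noteq> 0" using t22_0 by simp
  moreover have "\<not> is_unit (gcd t22 g12)" using ne by simp
  ultimately obtain f where fd: "f dvd gcd t22 g12" and fp: "prime f"
    using prime_divisor_exists by blast
  have pf: "prime_elem f" using fp by simp
  have ft: "f dvd t22" and f12: "f dvd g12" using fd by auto
  have fg22': "f dvd g22'" and nfr: "\<not> f dvd reflect_poly g22'" using K5[OF pf] ft by auto
  have f22: "f dvd g22" using fg22' g22'_dvd by (rule dvd_trans)
  have fX: "f dvd X" using f22 d22 by (rule dvd_trans)
  have f: "PX f" using pf fX by blast
  define f' where "f' = reflect_poly f"
  have f': "PX f'" "reflect_poly f' = f" using Rf[OF f] RRf[OF f] by (auto simp: f'_def)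
  have pf': "prime_elem f'" using f' by blast
  have Jf: "\<And>y. f dvd J m y \<longleftrightarrow> f' dvd y" using Jiff[OF f] by (simp add: f'_def)
  have I: "\<forall>f. PX f \<longrightarrow> f dvd g \<longrightarrow> reflect_poly f dvd g"
  proof -
    have gX: "g dvd X" unfolding g_def using gcd_dvd1 d11 by (rule dvd_trans)
    show ?thesis using SR[OF gX] fI[OF lcd] by blast
  qed
  have II: "\<forall>f. PX f \<longrightarrow> f dvd l \<longrightarrow> reflect_poly f dvd l" using SR[OF l_dvd] fII[OF lcd] by blast
  have nfg: "\<not> f dvd g" using K4a[OF pf f22] fg22' by blast
  then have n11: "\<not> f dvd g11" using K1 f22 by blast
  have "\<not> f' dvd g" using I f' nfg by metis
  moreover have "\<not> f dvd l" using K2[OF f] f22 by blast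
  then have "\<not> f' dvd l" using II f' by metis
  moreover have "\<not> f' dvd g22'" using nfr Riff[OF f] f'_def by simp
  then have "\<not> f' dvd g22" using K4a[OF pf'] \<open>\<not> f' dvd g\<close> by blast
  ultimately have "f' dvd g11" using K2[OF f'(1)] by blast
  then have j11: "f dvd J11" using Jf by blast
  have "f dvd (1 * g11) * J11 + (1 * g12 + 0 * g22) * J12" using j11 f12 by simp
  moreover have "f dvd (1 * g12 + 0 * g22) * J22" using f12 by simp
  ultimately have "f dvd 1 * g11" using wit[OF lcd f] by blast
  then show False using n11 by simp
qed

lemma fIV:
  assumes lcd: "euclid_LCD m C"
  shows "gcd r22 S = 1"
proof (rule ccontr)
  assume ne: "gcd r22 S \<noteq> 1"
  have r0: "r22 \<noteq> 0" using g22'_eq t22_0 g22_0 g22'_def by auto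
  then have "gcd r22 S \<noteq> 0" by simp
  moreover have "\<not> is_unit (gcd r22 S)" using ne by simp
  ultimately obtain f where fd: "f dvd gcd r22 S" and fp: "prime f"
    using prime_divisor_exists by blast
  have pf: "prime_elem f" using fp by simp
  have fr: "f dvd r22" and fS: "f dvd S" using fd by auto
  have fg22': "f dvd g22'" and fr': "f dvd reflect_poly g22'" using K6 fr by auto
  have f22: "f dvd g22" using fg22' g22'_dvd by (rule dvd_trans)
  have fX: "f dvd X" using f22 d22 by (rule dvd_trans)
  have f: "PX f" using pf fX by blast
  have nfg: "\<not> f dvd g" using K4a[OF pf f22] fg22' by blast
  then have n11: "\<not> f dvd g11" using K1 f22 by blast
  have "reflect_poly f dvd g22'" using Riff[OF f] fr' by blast
  then have "reflect_poly f dvd g22" using g22'_dvd by (rule dvd_trans)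
  then have j22: "f dvd J22" using Jiff[OF f] by blast
  have "f dvd g11 * J11 + g12 * J12" using JT fX fS by blast
  then have "f dvd (1 * g11) * J11 + (1 * g12 + 0 * g22) * J12" by simp
  moreover have "f dvd (1 * g12 + 0 * g22) * J22" using j22 by simp
  ultimately have "f dvd 1 * g11" using wit[OF lcd f] by blast
  then show False using n11 by simp
qed

lemma main: "euclid_LCD m C \<longleftrightarrow> self_reciprocal g \<and> self_reciprocal l \<and> gcd t22 g12 = 1 \<and> gcd r22 S = 1"
proof
  assume "euclid_LCD m C" then show "self_reciprocal g \<and> self_reciprocal l \<and> gcd t22 g12 = 1 \<and> gcd r22 S = 1"
    using fI fII fIII fIV by simp
next
  assume "self_reciprocal g \<and> self_reciprocal l \<and> gcd t22 g12 = 1 \<and> gcd r22 S = 1"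
  then show "euclid_LCD m C" using bwd by simp
qed

end

theorem theorem3p1:
  fixes g11 g12 g22 g l g11' g22' r11 t11 r22 t22 :: "'a::{field_gcd,finite} poly"
    and m :: nat
  assumes "m \<ge> 1"
    and "coprime (card (UNIV :: 'a set)) m"
    and "g11 dvd xm1 m" and "g22 dvd xm1 m"
    and "g12 = 0 \<or> degree g12 < degree g22"
    and "g11 * g22 dvd xm1 m * g12"
    and "g = gcd g11 g22"
    and "l = xm1 m div lcm g11 g22"
    and "g11 = g * g11'" and "g22 = g * g22'"
    and "r11 = gcd g11' (reflect_poly g11')" and "t11 = g11' div r11"
    and "r22 = gcd g22' (reflect_poly g22')" and "t22 = g22' div r22"
  shows "euclid_LCD m (qc_code m g11 g12 g22) \<longleftrightarrow>
           self_reciprocal g \<and> self_reciprocal l \<and> gcd t22 g12 = 1 \<and>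
           gcd r22 (g11 * transpose_poly m g11 + g12 * transpose_poly m g12) = 1"
proof -
  interpret qcset g11 g12 g22 g l g11' g22' r11 t11 r22 t22 m
    by unfold_locales (rule assms)+
  show ?thesis by (rule main)
qed



end
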